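(* Let $X=(-\frac12,\frac12)^{\mathbb N}$ with the product $\sigma$-algebra and the product probability measure $\mu$ generated by Lebesgue measure on $(-\frac12,\frac12)$. Then $\mu(S\cap X)=1$ and $\mu(c_0\cap X)=\mu(c\cap X)=\mu(\widehat{c_0}\cap X)=0$.
   Context: $\ell^\infty$ is the space of bounded real sequences; $c$ and $c_0$ are the sets of convergent sequences and of sequences convergent to $0$. A Banach limit is a linear functional $L\colon\ell^\infty\to\mathbb R$ such that for every $(x_n)\in\ell^\infty$: (1) if $x_n\ge0$ for all $n$ then $L((x_n))\ge0$; (2) $L((x_2,x_3,\dots))=L((x_1,x_2,\dots))$; (3) $L((1,1,\dots))=1$. $\widehat{c_0}$ is the set of $x\in\ell^\infty$ with $L(x)=0$ for every Banach limit $L$. $S=\{x\in\ell^\infty\colon\lim_n\frac{x_1+\dots+x_n}{n}\text{ exists}\}$. *)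

theory Defs
  imports "HOL-Probability.Probability"
begin

text \<open>Real sequences are functions nat => real; index 0 plays the role of index 1.\<close>

definition linf :: "(nat \<Rightarrow> real) set" where
  "linf = {x. bounded (range x)}"

definition conv_seqs :: "(nat \<Rightarrow> real) set" where
  "conv_seqs = {x. convergent x}"

definition null_seqs :: "(nat \<Rightarrow> real) set" where
  "null_seqs = {x. x \<longlonglongrightarrow> 0}"

definition banach_limit :: "((nat \<Rightarrow> real) \<Rightarrow> real) \<Rightarrow> bool" where
  "banach_limit L \<longleftrightarrow>
     (\<forall>x\<in>linf. \<forall>y\<in>linf. L (\<lambda>n. x n + y n) = L x + L y) \<and>
     (\<forall>a::real. \<forall>x\<in>linf. L (\<lambda>n. a * x n) = a * L x) \<and>
     (\<forall>x\<in>linf. (\<forall>n. x n \<ge> 0) \<longrightarrow> L x \<ge> 0) \<and>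
     (\<forall>x\<in>linf. L (\<lambda>n. x (Suc n)) = L x) \<and>
     L (\<lambda>n. 1) = 1"

definition c0_hat :: "(nat \<Rightarrow> real) set" where
  "c0_hat = {x\<in>linf. \<forall>L. banach_limit L \<longrightarrow> L x = 0}"

definition cesaro_seqs :: "(nat \<Rightarrow> real) set" where
  "cesaro_seqs = {x\<in>linf. convergent (\<lambda>n. (\<Sum>i<Suc n. x i) / real (Suc n))}"

definition cube :: "(nat \<Rightarrow> real) set" where
  "cube = {x. \<forall>n. x n \<in> {-1/2<..<1/2}}"

definition mu :: "(nat \<Rightarrow> real) measure" where
  "mu = PiM UNIV (\<lambda>_. uniform_measure lborel {-1/2<..<(1/2::real)})"

end

theory Submission
  imports Defs
begin

abbreviation U :: "real measure" where "U \<equiv> uniform_measure lborel {-1/2<..<(1/2::real)}"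

lemma U_prob: "prob_space U"
  by (rule prob_space_uniform_measure) auto
lemma SQ_ax: "sequence_space U"
  unfolding sequence_space_def product_prob_space_def product_sigma_finite_def product_prob_space_axioms_def
  using U_prob prob_space_imp_sigma_finite by auto
interpretation SQ: sequence_space U by (rule SQ_ax)
lemma mu_eq: "mu = SQ.S" unfolding mu_def ..
lemma space_mu[simp]: "space mu = UNIV"
  unfolding mu_def space_PiM space_uniform_measure space_lborel by simp
lemma prob_mu: "prob_space mu" unfolding mu_eq by (rule SQ.P.prob_space_axioms)
lemma coord_meas0: "(\<lambda>x. x i) \<in> measurable mu U" unfolding mu_def by (rule measurable_component_singleton) (rule UNIV_I)
lemma coord_meas[measurable]: "(\<lambda>x. x i) \<in> borel_measurable mu"
  using coord_meas0 measurable_cong_sets[of mu mu U borel] by simp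


lemma measure_cyl:
  assumes "finite J" "X \<in> sets borel"
  shows "measure mu {x. \<forall>i\<in>J. x i \<in> X} = measure U X ^ card J"
proof -
  have "{x. \<forall>i\<in>J. x i \<in> X} = prod_emb UNIV (\<lambda>_. U) J (Pi\<^sub>E J (\<lambda>_. X))"
    by (auto simp: prod_emb_def space_PiM PiE_iff)
  then show ?thesis using SQ.measure_PiM_emb[of J "\<lambda>_. X"] assms
    by (simp add: mu_def)
qed

lemma indep_coords: "prob_space.indep_vars mu (\<lambda>_. U) (\<lambda>i x. x i) UNIV"
proof -
  interpret P: prob_space mu by (rule prob_mu)
  have rv: "(\<lambda>x. x i) \<in> measurable mu U" for i
    by (rule coord_meas0)
  have "distr mu (PiM UNIV (\<lambda>i. U)) (\<lambda>x. \<lambda>i\<in>UNIV. x i) = PiM UNIV (\<lambda>i. distr mu U (\<lambda>x. x i))"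
  proof -
    have "distr mu (PiM UNIV (\<lambda>i. U)) (\<lambda>x. \<lambda>i\<in>UNIV. x i) = distr mu mu (\<lambda>x. x)"
      by (simp add: mu_def restrict_UNIV)
    also have "\<dots> = mu" by simp
    also have "\<dots> = PiM UNIV (\<lambda>i. distr mu U (\<lambda>x. x i))"
      unfolding mu_def using SQ.PiM_component by simp
    finally show ?thesis .
  qed
  then show ?thesis using P.indep_vars_iff_distr_eq_PiM[where I=UNIV and M'="\<lambda>_. U" and X="\<lambda>i x. x i"] rv by simp
qed



lemma blk_disj:
  assumes "(m::nat)*n < na*n + n" "na*n < m*n + n" shows "m = na"
proof -
  have "m*n < Suc na * n" "na*n < Suc m * n" using assms by (simp_all add: algebra_simps)
  then have "m < Suc na" "na < Suc m" by (metis mult_less_cancel2)+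
  then show ?thesis by simp
qed

lemma cyl_sets: "finite J \<Longrightarrow> X \<in> sets borel \<Longrightarrow> {x. \<forall>i\<in>J. x i \<in> X} \<in> sets mu"
proof -
  assume [measurable]: "finite J" "X \<in> sets borel"
  have "{x\<in>space mu. \<forall>i\<in>J. x i \<in> X} \<in> sets mu" by measurable
  then show ?thesis by simp
qed

lemma compl_mu: "S \<in> sets mu \<Longrightarrow> UNIV - S \<in> sets mu"
  using sets.compl_sets[of S mu] by simp

lemma blocks_AE:
  assumes T[measurable]: "T \<in> sets borel" and p: "measure U T > 0"
  shows "AE x in mu. \<forall>n. \<exists>k. \<forall>i<n. x (k+i) \<in> T"
proof -
  interpret P: prob_space mu by (rule prob_mu)
  have "AE x in mu. \<exists>k. \<forall>i<n. x (k+i) \<in> T" for n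
  proof (cases "n = 0")
    case True then show ?thesis by simp
  next
    case False
    define q where "q = measure U T ^ n"
    have q0: "q > 0" using p by (simp add: q_def)
    have q1: "q \<le> 1" unfolding q_def by (intro power_le_one measure_nonneg SQ.M.prob_le_1)
    define N where "N = {x\<in>space mu. \<forall>k. \<not>(\<forall>i<n. x (k+i) \<in> T)}"
    have Nm: "N \<in> sets mu" unfolding N_def by measurable
    define K where "K = (\<lambda>j::nat. {j*n..<j*n+n})"
    have cardK: "card (K j) = n" for j by (simp add: K_def)
    have bound: "measure mu N \<le> (1 - q) ^ J" if J: "J > 0" for J
    proof -
      define A where "A = (\<lambda>j. space (PiM (K j) (\<lambda>_. U)) - PiE (K j) (\<lambda>_. T))"
      define B where "B = (\<lambda>j (\<omega>::nat\<Rightarrow>real). restrict (\<lambda>i. \<omega> i) (K j))"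
      have ind: "P.indep_vars (\<lambda>j. PiM (K j) (\<lambda>_. U)) B {..<J}"
        unfolding B_def
        by (rule P.indep_vars_restrict[OF indep_coords])
           (auto simp: disjoint_family_on_def K_def dest: blk_disj)
      have Am: "A j \<in> sets (PiM (K j) (\<lambda>_. U))" for j
        unfolding A_def by (intro sets.compl_sets sets_PiM_I_finite) (auto simp: K_def)
      have pre: "B j -` A j \<inter> space mu = UNIV - {x. \<forall>i\<in>K j. x i \<in> T}" for j
        by (auto simp: A_def B_def space_PiM PiE_iff)
      have "measure mu N \<le> measure mu (\<Inter>j\<in>{..<J}. B j -` A j \<inter> space mu)"
      proof (rule P.finite_measure_mono)
        show "N \<subseteq> (\<Inter>j\<in>{..<J}. B j -` A j \<inter> space mu)"
        proof
          fix x assume "x \<in> N"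
          then have "\<not>(\<forall>i<n. x (j*n+i) \<in> T)" for j unfolding N_def by blast
          then have "\<not>(\<forall>i\<in>K j. x i \<in> T)" for j
            unfolding K_def by (metis add_less_cancel_left atLeastLessThan_iff le_add1)
          then show "x \<in> (\<Inter>j\<in>{..<J}. B j -` A j \<inter> space mu)" using pre by blast
        qed
        show "(\<Inter>j\<in>{..<J}. B j -` A j \<inter> space mu) \<in> sets mu"
          using J pre cyl_sets[of "K _" T] by (intro sets.finite_INT) (auto simp: K_def intro!: compl_mu)
      qed
      also have "\<dots> = (\<Prod>j\<in>{..<J}. measure mu (B j -` A j \<inter> space mu))"
        by (rule P.indep_varsD[OF ind]) (use J Am in auto)
      also have "\<dots> = (\<Prod>j\<in>{..<J}. 1 - q)"
      proof (rule prod.cong[OF refl])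
        fix j
        have m: "{x. \<forall>i\<in>K j. x i \<in> T} \<in> sets mu" by (rule cyl_sets) (auto simp: K_def)
        have "measure mu (UNIV - {x. \<forall>i\<in>K j. x i \<in> T}) = 1 - measure mu {x. \<forall>i\<in>K j. x i \<in> T}"
          using P.prob_compl[OF m] by simp
        also have "\<dots> = 1 - q" using measure_cyl[of "K j" T] by (simp add: K_def q_def cardK)
        finally show "measure mu (B j -` A j \<inter> space mu) = 1 - q" using pre[of j] by simp
      qed
      finally show ?thesis by simp
    qed
    have "(\<lambda>J. (1 - q) ^ J) \<longlonglongrightarrow> 0"
      by (rule LIMSEQ_power_zero) (use q0 q1 in auto)
    then have "measure mu N \<le> 0"
      by (rule LIMSEQ_le_const) (use bound in \<open>auto intro!: exI[of _ 1]\<close>)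
    then have "measure mu N = 0" using measure_nonneg[of mu N] by linarith
    then have "N \<in> null_sets mu"
      using Nm by (simp add: null_sets_def P.emeasure_eq_measure)
    then have "AE x in mu. x \<notin> N" by (rule AE_not_in)
    then show ?thesis by (auto simp: N_def)
  qed
  then show ?thesis by (simp add: AE_all_countable)
qed



lemma sets_U: "sets U = sets borel" by simp

lemma indep_coords_borel: "prob_space.indep_vars mu (\<lambda>_. borel) (\<lambda>i x. x i) UNIV"
proof -
  interpret P: prob_space mu by (rule prob_mu)
  show ?thesis using indep_coords unfolding P.indep_vars_def
    by (simp add: measurable_cong_sets[OF refl sets_U])
qed

lemma distr_coord: "distr mu borel (\<lambda>x. x i) = distr mu borel (\<lambda>x. x 0)"
proof -
  have *: "emeasure (distr mu borel (\<lambda>x. x j)) A = emeasure U A" if A: "A \<in> sets borel" for j A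
  proof -
    have "emeasure (distr mu borel (\<lambda>x. x j)) A = emeasure mu {x\<in>space mu. x j \<in> A}"
      using A by (subst emeasure_distr) (auto simp: vimage_def)
    also have "\<dots> = emeasure U A"
      unfolding mu_def using A by (intro SQ.emeasure_PiM_Collect_single) auto
    finally show ?thesis .
  qed
  show ?thesis by (rule measure_eqI) (simp_all add: *)
qed

lemma AE_coord_int: "AE x in mu. x i \<in> {-1/2<..<1/2}"
  unfolding mu_def by (rule SQ.AE_component) (auto intro!: AE_uniform_measureI)

lemma cesaro_AE: "AE x in mu. convergent (\<lambda>n. (\<Sum>i<Suc n. x i) / real (Suc n))"
proof -
  interpret P: prob_space mu by (rule prob_mu)
  define c where "c = P.expectation (\<lambda>x. x 0)"
  define f where "f = (\<lambda>n x. (\<Sum>i<Suc n. x i) / real (Suc n))"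
  have bnd: "measure mu {x\<in>space mu. \<bar>f n x - c\<bar> \<ge> e} \<le> 2 * exp (-2 * e\<^sup>2) ^ Suc n"
    if e: "e \<ge> 0" for n e
  proof -
    interpret H: Hoeffding_ineq_iid mu "{..<Suc n}" "\<lambda>i x. x i" "\<lambda>x. x 0" "-1/2" "1/2" c
    proof unfold_locales
      show "c \<equiv> P.expectation (\<lambda>x. x 0)" by (simp add: c_def)
      show "finite {..<Suc n}" by simp
      show "P.indep_vars (\<lambda>_. borel) (\<lambda>i x. x i) {..<Suc n}"
        by (rule P.indep_vars_subset[OF indep_coords_borel]) auto
      show "distr mu borel (\<lambda>x. x i) = distr mu borel (\<lambda>x. x 0)" for i by (rule distr_coord)
      show "(\<lambda>x. x 0) \<in> borel_measurable mu" by simp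
      show "AE x in mu. x 0 \<in> {- 1 / 2..1 / 2}" using AE_coord_int[of 0] by eventually_elim auto
    qed
    have h: "measure mu {x\<in>space mu. \<bar>(\<Sum>i\<in>{..<Suc n}. x i) / real (card {..<Suc n}) - c\<bar> \<ge> e}
       \<le> 2 * exp (-2 * real (card {..<Suc n}) * e\<^sup>2 / (1/2 - -1/2)\<^sup>2)"
      by (rule H.Hoeffding_ineq_abs_ge'[OF e]) auto
    have "measure mu {x\<in>space mu. \<bar>f n x - c\<bar> \<ge> e} \<le> 2 * exp (real (Suc n) * (-2 * e\<^sup>2))"
    proof -
      have eq: "-2 * real (card {..<Suc n}) * e\<^sup>2 / (1/2 - -1/2)\<^sup>2 = real (Suc n) * (-2 * e\<^sup>2)"
        by (simp add: algebra_simps)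
      show ?thesis using h unfolding eq unfolding card_lessThan f_def .
    qed
    also have "\<dots> = 2 * exp (-2 * e\<^sup>2) ^ Suc n"
      by (simp only: exp_of_nat_mult)
    finally show ?thesis .
  qed
  have "AE x in mu. \<forall>m::nat. eventually (\<lambda>n. \<bar>f n x - c\<bar> < 1 / Suc m) sequentially"
  proof (subst AE_all_countable, intro allI)
    fix m :: nat
    define e where "e = 1 / real (Suc m)"
    have e0: "e > 0" by (simp add: e_def)
    define A where "A = (\<lambda>n. {x\<in>space mu. \<bar>f n x - c\<bar> \<ge> e})"
    have Am: "A n \<in> sets mu" for n unfolding A_def f_def by measurable
    have r: "exp (-2 * e\<^sup>2) < 1" using e0 by simp
    have "summable (\<lambda>n. 2 * exp (-2 * e\<^sup>2) ^ Suc n)"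
      using r by (intro summable_mult summable_Suc_iff[THEN iffD2] summable_geometric) auto
    then have "summable (\<lambda>n. measure mu (A n))"
      by (rule summable_comparison_test'[where N=0]) (use bnd e0 in \<open>auto simp: A_def\<close>)
    then have "AE x in mu. eventually (\<lambda>n. x \<in> space mu - A n) sequentially"
      by (intro borel_cantelli_AE1 Am) (auto simp: P.emeasure_eq_measure)
    then show "AE x in mu. eventually (\<lambda>n. \<bar>f n x - c\<bar> < 1 / Suc m) sequentially"
      by eventually_elim (auto simp: A_def e_def elim!: eventually_mono)
  qed
  then show ?thesis
  proof eventually_elim
    case (elim x)
    have "(\<lambda>n. f n x) \<longlonglongrightarrow> c"
    proof (rule LIMSEQ_I)
      fix r :: real assume "r > 0"
      then obtain m where m: "1 / real (Suc m) < r" using reals_Archimedean[of r]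
        by (auto simp: divide_inverse)
      from elim[rule_format, of m] obtain N where "\<forall>n\<ge>N. \<bar>f n x - c\<bar> < 1 / Suc m"
        by (auto simp: eventually_sequentially)
      then show "\<exists>no. \<forall>n\<ge>no. norm (f n x - c) < r" using m by force
    qed
    then show ?case unfolding f_def convergent_def by blast
  qed
qed



definition ultra :: "nat filter \<Rightarrow> bool" where
  "ultra F \<longleftrightarrow> F \<noteq> bot \<and> F \<le> sequentially \<and> (\<forall>P. eventually P F \<or> eventually (\<lambda>x. \<not> P x) F)"

lemma ex_ultra: "\<exists>F. ultra F"
proof -
  let ?S = "sequentially :: nat filter"
  let ?R = "{(G, H). H \<noteq> bot \<and> H \<le> G \<and> G \<le> ?S}"
  have fld: "Field ?R = {G. G \<noteq> bot \<and> G \<le> ?S}"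
    by (auto simp: Field_def bot_unique)
  have po: "Partial_order ?R"
    by (auto simp: partial_order_on_def preorder_on_def antisym_def refl_on_def trans_def Field_def bot_unique)
  have ub: "\<exists>u\<in>Field ?R. \<forall>a\<in>C. (a, u) \<in> ?R" if C: "C \<in> Chains ?R" for C
  proof (cases "C = {}")
    case True
    show ?thesis by (rule bexI[of _ ?S]) (use fld True in auto)
  next
    case False
    have Cne: "\<forall>G\<in>C. G \<noteq> bot \<and> G \<le> ?S" using C by (auto simp: Chains_def)
    have dir: "\<And>G H. G \<in> C \<Longrightarrow> H \<in> C \<Longrightarrow> \<exists>K\<in>C. K \<le> inf G H"
    proof -
      fix G H assume "G \<in> C" "H \<in> C"
      then have "(G, H) \<in> ?R \<or> (H, G) \<in> ?R \<or> G = H" using C by (auto simp: Chains_def)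
      then show "\<exists>K\<in>C. K \<le> inf G H" using \<open>G \<in> C\<close> \<open>H \<in> C\<close> by auto
    qed
    have nb: "Inf C \<noteq> bot"
    proof
      assume "Inf C = bot"
      then have "eventually (\<lambda>_. False) (Inf C)" by simp
      then obtain G where "G \<in> C" "eventually (\<lambda>_. False) G"
        using eventually_Inf_base[OF False dir] by auto
      then show False using Cne by (simp add: trivial_limit_def)
    qed
    obtain G0 where G0: "G0 \<in> C" using False by auto
    have le: "Inf C \<le> ?S" using G0 Cne Inf_lower2 by blast
    show ?thesis
    proof (rule bexI[of _ "Inf C"])
      show "Inf C \<in> Field ?R" using fld nb le by simp
      show "\<forall>a\<in>C. (a, Inf C) \<in> ?R" using Cne nb le by (auto intro: Inf_lower)
    qed
  qed
  obtain M where M: "M \<in> Field ?R" and max: "\<forall>a\<in>Field ?R. (M, a) \<in> ?R \<longrightarrow> a = M"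
    using Zorns_po_lemma[OF po ub] by blast
  have "ultra M"
    unfolding ultra_def
  proof (intro conjI allI)
    show "M \<noteq> bot" "M \<le> ?S" using M fld by auto
    fix P :: "nat \<Rightarrow> bool"
    show "eventually P M \<or> eventually (\<lambda>x. \<not> P x) M"
    proof (rule disjCI)
      assume ne: "\<not> eventually (\<lambda>x. \<not> P x) M"
      let ?M' = "inf M (principal {x. P x})"
      have "?M' \<noteq> bot"
        using ne by (simp add: trivial_limit_def eventually_inf_principal)
      moreover have "?M' \<le> M" by simp
      moreover have MS: "M \<le> ?S" using M fld by simp
      ultimately have "(M, ?M') \<in> ?R" "?M' \<in> Field ?R"
        using fld order_trans[of ?M' M ?S] by simp_all
      then have eq: "?M' = M" using mp[OF bspec[OF max]] by simp
      have "eventually P ?M'" by (simp add: eventually_inf_principal)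
      then show "eventually P M" by (simp only: eq)
    qed
  qed
  then show ?thesis by blast
qed

lemma ultra_lim:
  fixes f :: "nat \<Rightarrow> real"
  assumes U: "ultra F" and B: "\<And>n. \<bar>f n\<bar> \<le> B"
  shows "\<exists>l. (f \<longlongrightarrow> l) F"
proof -
  let ?G = "filtermap f F"
  have Gnb: "?G \<noteq> bot" using U by (simp add: ultra_def filtermap_bot_iff)
  have "eventually (\<lambda>x. x \<in> cball 0 B) ?G" using B by (simp add: eventually_filtermap)
  then obtain l where l: "inf (nhds l) ?G \<noteq> bot"
    using compact_filter[THEN iffD1, OF compact_cball, rule_format, OF Gnb] by blast
  have "(f \<longlongrightarrow> l) F"
    unfolding tendsto_def
  proof (intro allI impI)
    fix S assume S: "open S" "l \<in> S"
    show "eventually (\<lambda>n. f n \<in> S) F"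
    proof (rule ccontr)
      assume "\<not> eventually (\<lambda>n. f n \<in> S) F"
      then have "eventually (\<lambda>n. f n \<notin> S) F" using U unfolding ultra_def by blast
      then have "eventually (\<lambda>x. x \<notin> S) ?G" by (simp add: eventually_filtermap)
      moreover have "eventually (\<lambda>x. x \<in> S) (nhds l)" using S by (rule eventually_nhds_in_open)
      ultimately have "eventually (\<lambda>_. False) (inf (nhds l) ?G)"
        unfolding eventually_inf by blast
      then show False using l by (simp add: trivial_limit_def)
    qed
  qed
  then show ?thesis by blast
qed


lemma linf_bound: "x \<in> linf \<Longrightarrow> \<exists>B. \<forall>n. \<bar>x n\<bar> \<le> B"
  unfolding linf_def bounded_iff by (simp add: real_norm_def)

lemma linf_I: "(\<And>n. \<bar>x n\<bar> \<le> B) \<Longrightarrow> x \<in> linf"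
  unfolding linf_def bounded_iff by (simp add: real_norm_def) blast

definition avg :: "(nat \<Rightarrow> nat) \<Rightarrow> (nat \<Rightarrow> nat) \<Rightarrow> (nat \<Rightarrow> real) \<Rightarrow> nat \<Rightarrow> real" where
  "avg k n x j = (\<Sum>i<n j. x (k j + i)) / real (n j)"

lemma sum_bound: "(\<And>m. \<bar>x m\<bar> \<le> B) \<Longrightarrow> \<bar>\<Sum>i<N. x (a + i)\<bar> \<le> real N * B"
proof -
  assume b: "\<And>m. \<bar>x m\<bar> \<le> B"
  have "\<bar>\<Sum>i<N. x (a + i)\<bar> \<le> (\<Sum>i<N. \<bar>x (a + i)\<bar>)" by (rule sum_abs)
  also have "\<dots> \<le> (\<Sum>i<N. B)" by (intro sum_mono b)
  finally show ?thesis by simp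
qed

lemma avg_bound:
  assumes "\<And>m. \<bar>x m\<bar> \<le> B" "n j > 0"
  shows "\<bar>avg k n x j\<bar> \<le> B"
proof -
  have "\<bar>\<Sum>i<n j. x (k j + i)\<bar> \<le> real (n j) * B" by (rule sum_bound) (rule assms(1))
  then have "\<bar>\<Sum>i<n j. x (k j + i)\<bar> / real (n j) \<le> real (n j) * B / real (n j)"
    by (rule divide_right_mono) simp
  then show ?thesis using assms(2) by (simp add: avg_def)
qed

locale blim =
  fixes F :: "nat filter" and k n :: "nat \<Rightarrow> nat"
  assumes U: "ultra F" and nge: "\<And>j. n j \<ge> Suc j"
begin

definition L :: "(nat \<Rightarrow> real) \<Rightarrow> real" where "L x = Lim F (avg k n x)"

lemma Fnb: "F \<noteq> bot" using U by (simp add: ultra_def)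

lemma npos: "n j > 0" using nge[of j] by simp

lemma tends: assumes "x \<in> linf" shows "(avg k n x \<longlongrightarrow> L x) F"
proof -
  obtain B where B: "\<And>m. \<bar>x m\<bar> \<le> B" using linf_bound[OF assms] by blast
  obtain l where l: "(avg k n x \<longlongrightarrow> l) F"
    using ultra_lim[OF U, of "avg k n x" B] avg_bound[where x=x and B=B and n=n and k=k, OF B npos] by blast
  then have "L x = l" unfolding L_def using Fnb by (intro tendsto_Lim) auto
  then show ?thesis using l by simp
qed

lemma L_eq: assumes "(avg k n x \<longlongrightarrow> a) F" shows "L x = a"
  unfolding L_def using Fnb assms by (intro tendsto_Lim) auto

lemma L_add: assumes x: "x \<in> linf" and y: "y \<in> linf" shows "L (\<lambda>m. x m + y m) = L x + L y"
proof -
  have "avg k n (\<lambda>m. x m + y m) = (\<lambda>j. avg k n x j + avg k n y j)"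
    by (simp add: fun_eq_iff avg_def sum.distrib add_divide_distrib)
  then show ?thesis
    using tendsto_add[OF tends[OF x] tends[OF y]] by (intro L_eq) simp
qed

lemma L_smult: assumes x: "x \<in> linf" shows "L (\<lambda>m. a * x m) = a * L x"
proof -
  have "avg k n (\<lambda>m. a * x m) = (\<lambda>j. a * avg k n x j)"
    by (simp add: fun_eq_iff avg_def sum_distrib_left)
  then show ?thesis
    using tendsto_mult_left[OF tends[OF x], of a] by (intro L_eq) simp
qed

lemma L_pos: assumes x: "x \<in> linf" and pos: "\<forall>m. 0 \<le> x m" shows "0 \<le> L x"
proof -
  have "\<forall>j. 0 \<le> avg k n x j" using pos by (simp add: avg_def sum_nonneg)
  then show "0 \<le> L x"
    using Fnb by (intro tendsto_lowerbound[OF tends[OF x]]) (auto intro: always_eventually)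
qed

lemma L_one: "L (\<lambda>m. 1) = 1"
proof -
  have "avg k n (\<lambda>m. 1) = (\<lambda>j. 1)" using npos by (simp add: avg_def fun_eq_iff)
  then show "L (\<lambda>m. 1) = 1" by (intro L_eq) simp
qed

lemma L_shift: assumes x: "x \<in> linf" shows "L (\<lambda>m. x (Suc m)) = L x"
proof -
  obtain B where B: "\<And>m. \<bar>x m\<bar> \<le> B" using linf_bound[OF x] by blast
  define d where "d = (\<lambda>j. avg k n (\<lambda>m. x (Suc m)) j - avg k n x j)"
  have d_eq: "d j = (x (k j + n j) - x (k j)) / real (n j)" for j
  proof -
    have "(\<Sum>i<n j. x (Suc (k j + i))) - (\<Sum>i<n j. x (k j + i)) = (\<Sum>i<n j. x (k j + Suc i) - x (k j + i))"
      by (simp add: sum_subtractf)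
    also have "\<dots> = x (k j + n j) - x (k j + 0)"
      by (rule sum_lessThan_telescope)
    finally have e: "(\<Sum>i<n j. x (Suc (k j + i))) - (\<Sum>i<n j. x (k j + i)) = x (k j + n j) - x (k j)" by simp
    have "d j = ((\<Sum>i<n j. x (Suc (k j + i))) - (\<Sum>i<n j. x (k j + i))) / real (n j)"
      unfolding d_def avg_def by (simp add: diff_divide_distrib)
    then show ?thesis by (simp only: e)
  qed
  have B0: "0 \<le> B" using B[of 0] by simp
  have dle: "norm (d j) \<le> 2 * B / real j" if j: "1 \<le> j" for j
  proof -
    have a: "\<bar>x (k j + n j) - x (k j)\<bar> \<le> 2 * B" using B[of "k j + n j"] B[of "k j"] by simp
    have b: "real j \<le> real (n j)" using nge[of j] by simp
    have c: "0 < real j" using j by simp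
    have "\<bar>x (k j + n j) - x (k j)\<bar> / real (n j) \<le> 2 * B / real j"
      using a b c B0 by (intro frac_le) (auto simp only:)
    moreover have "norm (d j) = \<bar>x (k j + n j) - x (k j)\<bar> / real (n j)"
      using npos[of j] by (simp add: d_eq)
    ultimately show ?thesis by simp
  qed
  have "(d \<longlongrightarrow> 0) sequentially"
  proof (rule Lim_null_comparison)
    show "(\<lambda>j. 2 * B / real j) \<longlonglongrightarrow> 0" by (rule lim_const_over_n)
    show "\<forall>\<^sub>F j in sequentially. norm (d j) \<le> 2 * B / real j"
      by (rule eventually_sequentiallyI[of 1]) (rule dle)
  qed
  moreover have "F \<le> sequentially" using U by (simp add: ultra_def)
  ultimately have "(d \<longlongrightarrow> 0) F" by (simp add: tendsto_mono)
  then have "((\<lambda>j. avg k n x j + d j) \<longlongrightarrow> L x + 0) F" by (intro tendsto_add tends[OF x])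
  then show ?thesis by (intro L_eq) (simp add: d_def)
qed

lemma banach: "banach_limit L"
  unfolding banach_limit_def using L_add L_smult L_pos L_shift L_one by blast

lemma L_ge:
  assumes x: "x \<in> linf" and e: "\<And>j. e \<le> \<bar>avg k n x j\<bar>"
  shows "e \<le> \<bar>L x\<bar>"
  using Fnb by (intro tendsto_lowerbound[OF tendsto_rabs[OF tends[OF x]]]) (auto intro: always_eventually e)

end



definition unif :: "(nat \<Rightarrow> real) \<Rightarrow> bool" where
  "unif x \<longleftrightarrow> (\<forall>m::nat. \<exists>N. \<forall>n\<ge>N. \<forall>k. \<bar>\<Sum>i<n. x (k+i)\<bar> \<le> real n / real (Suc m))"

lemma BL_add: "banach_limit L \<Longrightarrow> x \<in> linf \<Longrightarrow> y \<in> linf \<Longrightarrow> L (\<lambda>n. x n + y n) = L x + L y"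
  unfolding banach_limit_def by blast
lemma BL_smult: "banach_limit L \<Longrightarrow> x \<in> linf \<Longrightarrow> L (\<lambda>n. a * x n) = a * L x"
  unfolding banach_limit_def by blast
lemma BL_pos: "banach_limit L \<Longrightarrow> x \<in> linf \<Longrightarrow> (\<And>n. x n \<ge> 0) \<Longrightarrow> L x \<ge> 0"
  unfolding banach_limit_def by blast
lemma BL_shift: "banach_limit L \<Longrightarrow> x \<in> linf \<Longrightarrow> L (\<lambda>n. x (Suc n)) = L x"
  unfolding banach_limit_def by blast
lemma BL_one: "banach_limit L \<Longrightarrow> L (\<lambda>n. 1) = 1"
  unfolding banach_limit_def by blast

lemma linf_shift: "x \<in> linf \<Longrightarrow> (\<lambda>t. x (t + i)) \<in> linf"
proof -
  assume "x \<in> linf"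
  then obtain B where "\<And>n. \<bar>x n\<bar> \<le> B" using linf_bound by blast
  then show ?thesis by (intro linf_I) auto
qed

lemma linf_sum: "x \<in> linf \<Longrightarrow> (\<lambda>t. \<Sum>i<n. x (t + i)) \<in> linf"
proof -
  assume "x \<in> linf"
  then obtain B where B: "\<And>n. \<bar>x n\<bar> \<le> B" using linf_bound by blast
  have "\<bar>\<Sum>i<n. x (t + i)\<bar> \<le> real n * B" for t using sum_bound[where x=x and B=B and N=n and a=t, OF B] by simp
  then show ?thesis by (intro linf_I) auto
qed

lemma linf_const: "(\<lambda>t. c) \<in> linf"
  by (rule linf_I[of _ "\<bar>c\<bar>"]) simp

lemma BL_shift_iter: "banach_limit L \<Longrightarrow> x \<in> linf \<Longrightarrow> L (\<lambda>t. x (t + i)) = L x"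
proof (induction i)
  case 0 then show ?case by simp
next
  case (Suc i)
  have "L (\<lambda>t. x (t + Suc i)) = L (\<lambda>t. (\<lambda>s. x (s + i)) (Suc t))" by simp
  also have "\<dots> = L (\<lambda>s. x (s + i))" using BL_shift[OF Suc.prems(1) linf_shift[OF Suc.prems(2)]] by simp
  finally show ?case using Suc by simp
qed

lemma BL_zero: "banach_limit L \<Longrightarrow> L (\<lambda>t. 0) = 0"
  using BL_smult[of L "\<lambda>t. 1" 0] linf_const[of 1] by simp

lemma BL_sum: "banach_limit L \<Longrightarrow> x \<in> linf \<Longrightarrow> L (\<lambda>t. \<Sum>i<n. x (t + i)) = real n * L x"
proof (induction n)
  case 0 then show ?case using BL_zero by simp
next
  case (Suc n)
  have "L (\<lambda>t. \<Sum>i<Suc n. x (t + i)) = L (\<lambda>t. (\<lambda>t. \<Sum>i<n. x (t + i)) t + (\<lambda>t. x (t + n)) t)" by simp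
  also have "\<dots> = L (\<lambda>t. \<Sum>i<n. x (t + i)) + L (\<lambda>t. x (t + n))"
    by (rule BL_add[OF Suc.prems(1) linf_sum[OF Suc.prems(2)] linf_shift[OF Suc.prems(2)]])
  also have "\<dots> = real n * L x + L x" using Suc BL_shift_iter by simp
  finally show ?case by (simp add: algebra_simps)
qed

lemma BL_bound:
  assumes L: "banach_limit L" and y: "y \<in> linf" and c: "\<And>t. \<bar>y t\<bar> \<le> c"
  shows "\<bar>L y\<bar> \<le> c"
proof -
  have c1: "L (\<lambda>t. c * 1) = c" using BL_smult[OF L linf_const[of 1], of c] BL_one[OF L] by simp
  obtain By where By: "\<And>n. \<bar>y n\<bar> \<le> By" using linf_bound[OF y] by blast
  have m1: "(\<lambda>t. (-1) * y t) \<in> linf" by (rule linf_I[of _ By]) (simp add: By)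
  have p1: "(\<lambda>t. 1 * y t) \<in> linf" using y by simp
  have "\<bar>c - y t\<bar> \<le> \<bar>c\<bar> + By" "\<bar>c + y t\<bar> \<le> \<bar>c\<bar> + By" for t using By[of t] by linarith+
  then have lm: "(\<lambda>t. c - y t) \<in> linf" and lp: "(\<lambda>t. c + y t) \<in> linf" by (auto intro: linf_I)
  have "0 \<le> L (\<lambda>t. (\<lambda>t. c * 1) t + (\<lambda>t. (-1) * y t) t)"
    by (rule BL_pos[OF L]) (use c lm in \<open>auto dest: abs_le_D1\<close>)
  also have "\<dots> = c - L y"
    using BL_add[OF L linf_const m1] c1 BL_smult[OF L y, of "-1"] by simp
  finally have a: "L y \<le> c" by simp
  have cp: "0 \<le> c + y t" for t using abs_le_D2[OF c[of t]] by linarith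
  have "0 \<le> L (\<lambda>t. (\<lambda>t. c * 1) t + (\<lambda>t. 1 * y t) t)"
    by (rule BL_pos[OF L]) (use lp cp in simp_all)
  also have "\<dots> = c + L y"
    using BL_add[OF L linf_const p1] c1 BL_smult[OF L y, of 1] by simp
  finally have b: "- L y \<le> c" by simp
  show ?thesis using a b by simp
qed

lemma unif_imp_zero:
  assumes L: "banach_limit L" and x: "x \<in> linf" and u: "unif x"
  shows "L x = 0"
proof -
  have "\<bar>L x\<bar> \<le> 1 / real (Suc m)" for m
  proof -
    obtain N where N: "\<And>n k. n \<ge> N \<Longrightarrow> \<bar>\<Sum>i<n. x (k+i)\<bar> \<le> real n / real (Suc m)"
      using u unfolding unif_def by blast
    define n where "n = Suc N"
    have n0: "real n > 0" by (simp add: n_def)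
    define y where "y = (\<lambda>t. (1 / real n) * (\<Sum>i<n. x (t + i)))"
    obtain By where By: "\<And>t. \<bar>\<Sum>i<n. x (t + i)\<bar> \<le> By" using linf_bound[OF linf_sum[OF x, of n]] by blast
    have "\<bar>y t\<bar> \<le> \<bar>1 / real n\<bar> * By" for t
      unfolding y_def abs_mult by (rule mult_left_mono[OF By]) simp
    then have yl: "y \<in> linf" by (rule linf_I)
    have "L y = 1 / real n * L (\<lambda>t. \<Sum>i<n. x (t + i))"
      unfolding y_def by (rule BL_smult[OF L linf_sum[OF x]])
    also have "\<dots> = L x" using BL_sum[OF L x, of n] n0 by simp
    finally have Ly: "L y = L x" .
    have "\<bar>y t\<bar> \<le> 1 / real (Suc m)" for t
    proof -
      have "\<bar>\<Sum>i<n. x (t+i)\<bar> \<le> real n / real (Suc m)" using N[of n t] by (simp add: n_def)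
      then have "\<bar>\<Sum>i<n. x (i+t)\<bar> \<le> real n / real (Suc m)" by (simp add: add.commute)
      then show ?thesis unfolding y_def using n0
        by (simp add: abs_mult field_simps add.commute)
    qed
    then show ?thesis using BL_bound[OF L yl] Ly by simp
  qed
  then show ?thesis
  proof -
    assume h: "\<And>m. \<bar>L x\<bar> \<le> 1 / real (Suc m)"
    show ?thesis
    proof (rule ccontr)
      assume "L x \<noteq> 0"
      then have "\<bar>L x\<bar> > 0" by simp
      then obtain m where "inverse (real (Suc m)) < \<bar>L x\<bar>" using reals_Archimedean by blast
      then show False using h[of m] by (simp add: divide_inverse)
    qed
  qed
qed

lemma not_unif_imp:
  assumes x: "x \<in> linf" and nu: "\<not> unif x"
  shows "\<exists>L. banach_limit L \<and> L x \<noteq> 0"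
proof -
  obtain m where m: "\<forall>N. \<exists>n\<ge>N. \<exists>k. \<bar>\<Sum>i<n. x (k+i)\<bar> > real n / real (Suc m)"
    using nu unfolding unif_def by (auto simp: not_le)
  then have "\<forall>N. \<exists>nk. fst nk \<ge> Suc N \<and> \<bar>\<Sum>i<fst nk. x (snd nk + i)\<bar> > real (fst nk) / real (Suc m)"
    by (metis fst_conv snd_conv)
  then obtain f where f: "\<And>N. fst (f N) \<ge> Suc N \<and> \<bar>\<Sum>i<fst (f N). x (snd (f N) + i)\<bar> > real (fst (f N)) / real (Suc m)"
    by metis
  define nn where "nn = (\<lambda>N. fst (f N))"
  define kk where "kk = (\<lambda>N. snd (f N))"
  obtain F where F: "ultra F" using ex_ultra by blast
  interpret B: blim F kk nn
    by unfold_locales (use F f in \<open>auto simp: nn_def\<close>)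
  have "1 / real (Suc m) \<le> \<bar>B.L x\<bar>"
  proof (rule B.L_ge[OF x])
    fix j
    have p: "real (nn j) > 0" using B.npos[of j] by simp
    have "real (nn j) / real (Suc m) < \<bar>\<Sum>i<nn j. x (kk j + i)\<bar>" using f[of j] by (simp add: nn_def kk_def)
    then have "1 / real (Suc m) < \<bar>\<Sum>i<nn j. x (kk j + i)\<bar> / real (nn j)" using p
      by (simp add: field_simps)
    then show "1 / real (Suc m) \<le> \<bar>avg kk nn x j\<bar>" using p by (simp add: avg_def)
  qed
  then have "B.L x \<noteq> 0" by auto
  then show ?thesis using B.banach by blast
qed

lemma cube_abs: "x \<in> cube \<Longrightarrow> \<bar>x n\<bar> \<le> 1/2"
proof -
  assume "x \<in> cube"
  then have "x n \<in> {-1/2<..<1/2}" unfolding cube_def by blast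
  then show ?thesis by auto
qed

lemma c0_hat_char: "c0_hat \<inter> cube = {x. x \<in> cube \<and> unif x}"
proof -
  have cl: "x \<in> cube \<Longrightarrow> x \<in> linf" for x
    by (rule linf_I[of _ "1/2"]) (rule cube_abs)
  show ?thesis
    unfolding c0_hat_def using cl unif_imp_zero not_unif_imp by blast
qed


lemma null_iff: "(x \<longlonglongrightarrow> (0::real)) \<longleftrightarrow> (\<forall>m::nat. \<exists>N. \<forall>n\<ge>N. \<bar>x n\<bar> \<le> 1 / real (Suc m))"
proof
  assume "x \<longlonglongrightarrow> 0"
  then show "\<forall>m::nat. \<exists>N. \<forall>n\<ge>N. \<bar>x n\<bar> \<le> 1 / real (Suc m)"
    unfolding LIMSEQ_iff by (metis less_imp_le of_nat_0_less_iff real_norm_def diff_zero zero_less_Suc zero_less_divide_1_iff)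
next
  assume h: "\<forall>m::nat. \<exists>N. \<forall>n\<ge>N. \<bar>x n\<bar> \<le> 1 / real (Suc m)"
  show "x \<longlonglongrightarrow> 0"
  proof (rule LIMSEQ_I)
    fix r :: real assume "r > 0"
    then obtain m where m: "inverse (real (Suc m)) < r" using reals_Archimedean by blast
    obtain N where "\<forall>n\<ge>N. \<bar>x n\<bar> \<le> 1 / real (Suc m)" using h by blast
    then show "\<exists>no. \<forall>n\<ge>no. norm (x n - 0) < r" using m by (force simp: divide_inverse)
  qed
qed

lemma cube_linf: "x \<in> cube \<Longrightarrow> x \<in> linf"
  by (rule linf_I[of _ "1/2"]) (rule cube_abs)

lemma cube_sets: "cube \<in> sets mu"
proof -
  have "{x\<in>space mu. \<forall>n. x n \<in> {-1/2<..<1/2}} \<in> sets mu" by measurable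
  then show ?thesis by (simp add: cube_def)
qed

lemma AE_cube: "AE x in mu. x \<in> cube"
  unfolding cube_def using AE_coord_int by (simp add: AE_all_countable)

lemma posT1: "measure U {1/4<..<1/2} > 0"
  by (simp add: measure_uniform_measure)

lemma posT2: "measure U {-1/2<..<-1/4} > 0"
  by (simp add: measure_uniform_measure)

lemma block_sum:
  assumes "\<forall>i<n. x (k+i) \<in> {1/4<..<1/2::real}" "n > 0"
  shows "(\<Sum>i<n. x (k+i)) \<ge> real n / 4"
proof -
  have "(\<Sum>i<n. (1/4::real)) \<le> (\<Sum>i<n. x (k+i))"
    using assms(1) by (intro sum_mono) (auto simp: less_imp_le)
  then show ?thesis by simp
qed

lemma block_not_unif:
  assumes "\<forall>n. \<exists>k. \<forall>i<n. x (k+i) \<in> {1/4<..<1/2::real}"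
  shows "\<not> unif x"
proof
  assume "unif x"
  then obtain N where N: "\<And>n k. n \<ge> N \<Longrightarrow> \<bar>\<Sum>i<n. x (k+i)\<bar> \<le> real n / real (Suc 4)"
    unfolding unif_def by blast
  obtain k where k: "\<forall>i<Suc N. x (k+i) \<in> {1/4<..<1/2::real}" using assms by blast
  have "real (Suc N) / 4 \<le> (\<Sum>i<Suc N. x (k+i))" by (rule block_sum[OF k]) simp
  also have "\<dots> \<le> \<bar>\<Sum>i<Suc N. x (k+i)\<bar>" by simp
  also have "\<dots> \<le> real (Suc N) / real (Suc 4)" by (rule N) simp
  finally show False by (simp add: field_simps)
qed

lemma blocks_not_conv:
  assumes p: "\<forall>n. \<exists>k. \<forall>i<n. x (k+i) \<in> {1/4<..<1/2::real}"
    and q: "\<forall>n. \<exists>k. \<forall>i<n. x (k+i) \<in> {-1/2<..<-1/4::real}"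
  shows "\<not> convergent x"
proof
  assume "convergent x"
  then obtain l where "x \<longlonglongrightarrow> l" by (auto simp: convergent_def)
  then obtain N where N: "\<And>n. n \<ge> N \<Longrightarrow> \<bar>x n - l\<bar> < 1/4"
    unfolding LIMSEQ_iff by (metis real_norm_def zero_less_divide_1_iff zero_less_numeral)
  obtain a where a: "\<forall>i<Suc N. x (a+i) \<in> {1/4<..<1/2::real}" using p by blast
  obtain b where b: "\<forall>i<Suc N. x (b+i) \<in> {-1/2<..<-1/4::real}" using q by blast
  have "x (a+N) > 1/4" using a by auto
  moreover have "x (b+N) < -1/4" using b by auto
  moreover have "\<bar>x (a+N) - l\<bar> < 1/4" by (rule N) simp
  moreover have "\<bar>x (b+N) - l\<bar> < 1/4" by (rule N) simp
  ultimately show False by linarith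
qed

theorem corollary4p2:
  shows "cesaro_seqs \<inter> cube \<in> sets mu \<and> measure mu (cesaro_seqs \<inter> cube) = 1 \<and>
         null_seqs \<inter> cube \<in> sets mu \<and> measure mu (null_seqs \<inter> cube) = 0 \<and>
         conv_seqs \<inter> cube \<in> sets mu \<and> measure mu (conv_seqs \<inter> cube) = 0 \<and>
         c0_hat \<inter> cube \<in> sets mu \<and> measure mu (c0_hat \<inter> cube) = 0"
proof -
  interpret P: prob_space mu by (rule prob_mu)
  have m0: "measure mu S = 0" if "S \<in> sets mu" "AE x in mu. x \<notin> S" for S
    using P.prob_Collect_eq_0[of "\<lambda>x. x \<in> S"] that by simp
  have m1: "measure mu S = 1" if "S \<in> sets mu" "AE x in mu. x \<in> S" for S
    using P.prob_Collect_eq_1[of "\<lambda>x. x \<in> S"] that by simp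
  have cs: "cube \<in> sets mu" by (rule cube_sets)
  have e1: "cesaro_seqs \<inter> cube = cube \<inter> {x\<in>space mu. Cauchy (\<lambda>n. (\<Sum>i<Suc n. x i) / real (Suc n))}"
    unfolding cesaro_seqs_def using cube_linf by (auto simp: Cauchy_convergent_iff)
  have s1: "cesaro_seqs \<inter> cube \<in> sets mu" unfolding e1 using cs by measurable
  have a1: "AE x in mu. x \<in> cesaro_seqs \<inter> cube"
    using AE_cube cesaro_AE by eventually_elim (auto simp: cesaro_seqs_def cube_linf)
  have AEb: "AE x in mu. (\<forall>n. \<exists>k. \<forall>i<n. x (k+i) \<in> {1/4<..<1/2::real}) \<and>
                         (\<forall>n. \<exists>k. \<forall>i<n. x (k+i) \<in> {-1/2<..<-1/4::real})"
  proof -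
    have "AE x in mu. \<forall>n. \<exists>k. \<forall>i<n. x (k+i) \<in> {1/4<..<1/2::real}" by (rule blocks_AE[OF _ posT1]) simp
    moreover have "AE x in mu. \<forall>n. \<exists>k. \<forall>i<n. x (k+i) \<in> {-1/2<..<-1/4::real}" by (rule blocks_AE[OF _ posT2]) simp
    ultimately show ?thesis by eventually_elim auto
  qed
  have e2: "null_seqs \<inter> cube = cube \<inter> {x\<in>space mu. \<forall>m::nat. \<exists>N. \<forall>n\<ge>N. \<bar>x n\<bar> \<le> 1 / real (Suc m)}"
    unfolding null_seqs_def using null_iff by auto
  have s2: "null_seqs \<inter> cube \<in> sets mu" unfolding e2 using cs by measurable
  have e3: "conv_seqs \<inter> cube = cube \<inter> {x\<in>space mu. Cauchy (\<lambda>n. x n)}"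
    unfolding conv_seqs_def by (auto simp: Cauchy_convergent_iff)
  have s3: "conv_seqs \<inter> cube \<in> sets mu" unfolding e3 using cs by measurable
  have a3: "AE x in mu. x \<notin> conv_seqs \<inter> cube"
    using AEb by eventually_elim (use blocks_not_conv in \<open>auto simp: conv_seqs_def\<close>)
  have a2: "AE x in mu. x \<notin> null_seqs \<inter> cube"
    using a3 by eventually_elim (auto simp: null_seqs_def conv_seqs_def convergent_def)
  have e4: "c0_hat \<inter> cube = cube \<inter> {x\<in>space mu. \<forall>m::nat. \<exists>N. \<forall>n\<ge>N. \<forall>k. \<bar>\<Sum>i<n. x (k+i)\<bar> \<le> real n / real (Suc m)}"
    unfolding c0_hat_char unif_def by auto
  have [measurable]: "(\<lambda>x. \<bar>\<Sum>i<n. x (k+i)\<bar>) \<in> borel_measurable mu" for n k by measurable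
  have s4: "c0_hat \<inter> cube \<in> sets mu" unfolding e4 using cs by measurable
  have a4: "AE x in mu. x \<notin> c0_hat \<inter> cube"
    using AEb by eventually_elim (use block_not_unif in \<open>auto simp: c0_hat_char\<close>)
  show ?thesis using s1 s2 s3 s4 m1[OF s1 a1] m0[OF s2 a2] m0[OF s3 a3] m0[OF s4 a4] by blast
qed


end
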